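(* Consider the two-player game described in the context, with initial state $\mathbf{x}=(x,y)$. An equilibrium (Nash) pair of policies is $$(\psi_{\rm NE},T_{\rm NE})=\Big(\cos^{-1}\mu,\ \max\Big\{x-\tfrac{\mu}{\sqrt{1-\mu^2}}\,y,\ 0\Big\}\Big),$$ where $\psi_{\rm NE}$ means the Evader holds the constant heading $\cos^{-1}\mu$.
   Context: Pursuer-fixed frame: the Evader's relative position $\mathbf{x}(t)=(x(t),y(t))\in\mathbb{R}^2$ evolves as $\dot x=\mu\cos\psi(t)-1$, $\dot y=\mu\sin\psi(t)$, with $\mu\in(0,1)$. Game: the Evader chooses its heading trajectory $\psi(\cdot)$ subject to the constraint $\|\mathbf{x}(t)\|\ge1$ on $[0,T]$, and the Pursuer chooses the final time $T\ge0$; the payoff is the final distance $\|\mathbf{x}(T)\|$, which the Evader maximizes and the Pursuer minimizes. An equilibrium pair is one from which neither player benefits by unilateral deviation. The paper assumes $y\ge0$ throughout.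
   Formalization: The initial state $\mathbf{x}=(x,y)$ must moreover satisfy $\|\mathbf{x}\|\ge1$ and, whenever $T_{\rm NE}>0$, $\mu x+\sqrt{1-\mu^2} y\ge1$. The paper assumes this as well. *)

theory Defs
  imports "HOL-Analysis.Analysis"
begin

text \<open>Relative velocity in the Pursuer-fixed frame for Evader heading theta.\<close>
definition vel :: "real \<Rightarrow> real \<Rightarrow> real \<times> real" where
  "vel \<mu> \<theta> = (\<mu> * cos \<theta> - 1, \<mu> * sin \<theta>)"

definition traj :: "real \<Rightarrow> real \<times> real \<Rightarrow> (real \<Rightarrow> real) \<Rightarrow> real \<Rightarrow> real \<times> real" where
  "traj \<mu> x0 \<psi> t = x0 + integral {0..t} (\<lambda>s. vel \<mu> (\<psi> s))"

definition admissible :: "real \<Rightarrow> real \<times> real \<Rightarrow> (real \<Rightarrow> real) \<Rightarrow> real \<Rightarrow> bool" where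
  "admissible \<mu> x0 \<psi> T \<longleftrightarrow> 0 \<le> T \<and>
     (\<forall>t\<in>{0..T}. (\<lambda>s. vel \<mu> (\<psi> s)) integrable_on {0..t} \<and> 1 \<le> norm (traj \<mu> x0 \<psi> t))"

definition payoff :: "real \<Rightarrow> real \<times> real \<Rightarrow> (real \<Rightarrow> real) \<Rightarrow> real \<Rightarrow> real" where
  "payoff \<mu> x0 \<psi> T = norm (traj \<mu> x0 \<psi> T)"

definition is_equilibrium :: "real \<Rightarrow> real \<times> real \<Rightarrow> (real \<Rightarrow> real) \<Rightarrow> real \<Rightarrow> bool" where
  "is_equilibrium \<mu> x0 \<psi> T \<longleftrightarrow> admissible \<mu> x0 \<psi> T \<and>
     (\<forall>T'. admissible \<mu> x0 \<psi> T' \<longrightarrow> payoff \<mu> x0 \<psi> T \<le> payoff \<mu> x0 \<psi> T') \<and>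
     (\<forall>\<psi>'. admissible \<mu> x0 \<psi>' T \<longrightarrow> payoff \<mu> x0 \<psi>' T \<le> payoff \<mu> x0 \<psi> T)"

end

theory Submission
  imports Defs
begin

lemma traj_const:
  assumes "0 \<le> t"
  shows "traj \<mu> x0 (\<lambda>_. c) t = x0 + t *\<^sub>R vel \<mu> c"
  using assms by (simp add: traj_def)

lemma norm_pair_sq: "(norm (a::real, b::real))\<^sup>2 = a\<^sup>2 + b\<^sup>2"
  by (simp add: norm_Pair)

lemma evader_bound:
  fixes \<mu> T :: real and x0 :: "real \<times> real"
  assumes mu: "0 < \<mu>" and T: "0 \<le> T"
    and int: "(\<lambda>s. vel \<mu> (\<psi> s)) integrable_on {0..T}"
  shows "norm (traj \<mu> x0 \<psi> T) \<le> norm (x0 - (T, 0)) + \<mu> * T"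
proof -
  define g where "g = (\<lambda>s. vel \<mu> (\<psi> s) - ((-1::real), (0::real)))"
  have gi: "g integrable_on {0..T}" unfolding g_def
    by (intro integrable_diff int integrable_const_ivl)
  have ng: "norm (g s) = \<mu>" for s
  proof -
    have "g s = (\<mu> * cos (\<psi> s), \<mu> * sin (\<psi> s))" by (simp add: g_def vel_def)
    hence "(norm (g s))\<^sup>2 = \<mu>\<^sup>2"
      by (simp add: norm_pair_sq power_mult_distrib distrib_left[symmetric])
    thus ?thesis using mu by (metis norm_ge_zero power2_eq_imp_eq less_imp_le)
  qed
  have bnd: "norm (integral {0..T} g) \<le> integral {0..T} (\<lambda>_. \<mu>)"
    by (rule integral_norm_bound_integral[OF gi]) (auto simp: ng)
  also have "\<dots> = \<mu> * T" using T by simp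
  finally have b: "norm (integral {0..T} g) \<le> \<mu> * T" .
  have "integral {0..T} g = integral {0..T} (\<lambda>s. vel \<mu> (\<psi> s)) - integral {0..T} (\<lambda>s. ((-1::real), (0::real)))"
    unfolding g_def by (rule integral_diff[OF int integrable_const_ivl])
  also have "integral {0..T} (\<lambda>s. ((-1::real), (0::real))) = (-T, 0)" using T by simp
  finally have F: "integral {0..T} g = integral {0..T} (\<lambda>s. vel \<mu> (\<psi> s)) - (-T, 0)" .
  have I: "integral {0..T} (\<lambda>s. vel \<mu> (\<psi> s)) = integral {0..T} g + (-T, 0)"
    by (simp add: F prod_eq_iff)
  have "traj \<mu> x0 \<psi> T = (x0 - (T, 0)) + integral {0..T} g"
    unfolding traj_def I by (simp add: prod_eq_iff)
  hence "norm (traj \<mu> x0 \<psi> T) \<le> norm (x0 - (T, 0)) + norm (integral {0..T} g)"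
    by (simp add: norm_triangle_ineq)
  thus ?thesis using b by linarith
qed

theorem theorem3:
  fixes \<mu> x y :: real
  assumes "0 < \<mu>" and "\<mu> < 1" and "0 \<le> y"
    and "1 \<le> norm (x, y)"
    and "0 < x - \<mu> / sqrt (1 - \<mu>\<^sup>2) * y \<longrightarrow> 1 \<le> \<mu> * x + sqrt (1 - \<mu>\<^sup>2) * y"
  shows "is_equilibrium \<mu> (x, y) (\<lambda>t. arccos \<mu>) (max (x - \<mu> / sqrt (1 - \<mu>\<^sup>2) * y) 0)"
proof -
  define s where "s = sqrt (1 - \<mu>\<^sup>2)"
  have s2: "s\<^sup>2 = 1 - \<mu>\<^sup>2" unfolding s_def using assms(1,2)
    by (simp add: abs_square_less_1 less_imp_le)
  have sp: "0 < s" unfolding s_def using assms(1,2) by (simp add: abs_square_less_1)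
  define ts where "ts = x - \<mu> / s * y"
  define T where "T = max ts 0"
  have T0: "0 \<le> T" unfolding T_def by simp
  have vel: "vel \<mu> (arccos \<mu>) = (\<mu> * \<mu> - 1, \<mu> * s)"
    using assms(1,2) by (simp add: vel_def sin_arccos s_def)
  have tr: "traj \<mu> (x, y) (\<lambda>_. arccos \<mu>) t = (x - t * s\<^sup>2, y + t * \<mu> * s)" if "0 \<le> t" for t
    proof -
    have m1: "\<mu> * \<mu> - 1 = - s\<^sup>2" using s2 by (simp add: power2_eq_square)
    have "t * (\<mu> * \<mu> - 1) = - (t * s\<^sup>2)" by (simp add: m1)
    thus ?thesis using that by (simp add: traj_const vel algebra_simps)
  qed
  have key: "(x - t * s\<^sup>2)\<^sup>2 + (y + t * \<mu> * s)\<^sup>2 = s\<^sup>2 * (t - ts)\<^sup>2 + (\<mu> * x + s * y)\<^sup>2" for t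
  proof -
    have "ts * s = x * s - \<mu> * y" unfolding ts_def using sp by (simp add: field_simps)
    hence e: "s * ts = x * s - \<mu> * y" by (simp add: mult.commute)
    have "s\<^sup>2 * (t - ts)\<^sup>2 = s\<^sup>2 * t\<^sup>2 - 2 * t * s * (s * ts) + (s * ts)\<^sup>2"
      by (simp add: power2_eq_square algebra_simps)
    also have "\<dots> = s\<^sup>2 * t\<^sup>2 - 2 * t * s * (x * s - \<mu> * y) + (x * s - \<mu> * y)\<^sup>2" by (simp add: e)
    finally have h: "s\<^sup>2 * (t - ts)\<^sup>2 = s\<^sup>2 * t\<^sup>2 - 2 * t * s * (x * s - \<mu> * y) + (x * s - \<mu> * y)\<^sup>2" .
    have m: "\<mu> * (\<mu> * X) = X - s * (s * X)" for X
    proof -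
      have "\<mu> * \<mu> = 1 - s * s" using s2 by (simp add: power2_eq_square)
      thus ?thesis by (metis mult.assoc mult.left_neutral left_diff_distrib)
    qed
    show ?thesis unfolding h
      by (simp add: power2_eq_square algebra_simps m)
  qed
  have nrm: "(norm (traj \<mu> (x, y) (\<lambda>_. arccos \<mu>) t))\<^sup>2 = s\<^sup>2 * (t - ts)\<^sup>2 + (\<mu> * x + s * y)\<^sup>2"
    if "0 \<le> t" for t
    using that by (simp add: tr norm_pair_sq key)
  have minT: "norm (traj \<mu> (x, y) (\<lambda>_. arccos \<mu>) T) \<le> norm (traj \<mu> (x, y) (\<lambda>_. arccos \<mu>) t)"
    if "0 \<le> t" for t
  proof -
    have "s\<^sup>2 * (T - ts)\<^sup>2 \<le> s\<^sup>2 * (t - ts)\<^sup>2"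
    proof (cases "0 < ts")
      case True thus ?thesis by (simp add: T_def)
    next
      case False
      hence "T = 0" by (simp add: T_def)
      moreover have "(0 - ts)\<^sup>2 \<le> (t - ts)\<^sup>2" using False that
        by (intro power_mono) auto
      ultimately show ?thesis by (simp add: mult_left_mono)
    qed
    hence "(norm (traj \<mu> (x, y) (\<lambda>_. arccos \<mu>) T))\<^sup>2 \<le> (norm (traj \<mu> (x, y) (\<lambda>_. arccos \<mu>) t))\<^sup>2"
      using nrm[OF that] nrm[OF T0] by simp
    thus ?thesis by (simp add: power2_le_iff_abs_le)
  qed
  have adm: "admissible \<mu> (x, y) (\<lambda>_. arccos \<mu>) T"
    unfolding admissible_def
  proof (intro conjI T0 ballI)
    fix t assume t: "t \<in> {0..T}"
    show "(\<lambda>s. vel \<mu> ((\<lambda>_. arccos \<mu>) s)) integrable_on {0..t}" by (rule integrable_const_ivl)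
    show "1 \<le> norm (traj \<mu> (x, y) (\<lambda>_. arccos \<mu>) t)"
    proof (cases "0 < ts")
      case True
      hence "1 \<le> \<mu> * x + s * y" using assms(5) unfolding ts_def s_def by simp
      hence "1 \<le> (\<mu> * x + s * y)\<^sup>2" by (simp add: one_le_power)
      hence "1 \<le> (norm (traj \<mu> (x, y) (\<lambda>_. arccos \<mu>) t))\<^sup>2" using nrm[of t] t
        by (smt (verit) atLeastAtMost_iff mult_nonneg_nonneg zero_le_power2)
      thus ?thesis by (smt (verit, best) norm_ge_zero power2_le_imp_le power_one)
    next
      case False
      hence "t = 0" using t by (simp add: T_def)
      thus ?thesis using assms(4) by (simp add: traj_def)
    qed
  qed
  have val: "norm (traj \<mu> (x, y) (\<lambda>_. arccos \<mu>) T) = norm ((x, y) - (T, 0)) + \<mu> * T"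
  proof (cases "0 < ts")
    case False
    hence "T = 0" by (simp add: T_def)
    thus ?thesis by (simp add: traj_def)
  next
    case True
    hence TT: "T = ts" by (simp add: T_def)
    have xT: "x - T = \<mu> * (y / s)" using TT unfolding ts_def by simp
    have n1: "norm ((x, y) - (T, 0)) = y / s"
    proof -
      have "(x, y) - (T, 0) = (y / s) *\<^sub>R (\<mu>, s)" using xT sp by (simp add: field_simps)
      moreover have "norm (\<mu>, s) = 1"
        using s2 by (simp add: norm_Pair)
      moreover have "norm ((y / s) *\<^sub>R (\<mu>, s)) = \<bar>y / s\<bar> * norm (\<mu>, s)"
        by (rule norm_scaleR)
      ultimately show ?thesis using assms(3) sp by simp
    qed
    have "traj \<mu> (x, y) (\<lambda>_. arccos \<mu>) T = (y / s + \<mu> * T) *\<^sub>R (\<mu>, s)"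
    proof -
      have ss: "s\<^sup>2 = 1 - \<mu> * \<mu>" using s2 by (simp add: power2_eq_square)
      have "x - T * s\<^sup>2 = (x - T) + T * (\<mu> * \<mu>)" unfolding ss by (simp add: algebra_simps)
      also have "\<dots> = (y / s + \<mu> * T) * \<mu>" unfolding xT by (simp add: algebra_simps)
      finally have "x - T * s\<^sup>2 = (y / s + \<mu> * T) * \<mu>" .
      moreover have "y + T * \<mu> * s = (y / s + \<mu> * T) * s" using sp by (simp add: field_simps)
      ultimately show ?thesis using tr[OF T0] by simp
    qed
    moreover have "norm (\<mu>, s) = 1" using s2 by (simp add: norm_Pair)
    moreover have "norm ((y / s + \<mu> * T) *\<^sub>R (\<mu>, s)) = \<bar>y / s + \<mu> * T\<bar> * norm (\<mu>, s)"
      by (rule norm_scaleR)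
    ultimately show ?thesis using n1 assms(1,3) sp T0 by simp
  qed
  show ?thesis
    unfolding is_equilibrium_def T_def[symmetric, unfolded ts_def s_def] payoff_def
  proof (intro conjI allI impI)
    show "admissible \<mu> (x, y) (\<lambda>t. arccos \<mu>) T" using adm .
  next
    fix T' assume "admissible \<mu> (x, y) (\<lambda>t. arccos \<mu>) T'"
    hence "0 \<le> T'" by (simp add: admissible_def)
    thus "norm (traj \<mu> (x, y) (\<lambda>t. arccos \<mu>) T) \<le> norm (traj \<mu> (x, y) (\<lambda>t. arccos \<mu>) T')"
      by (rule minT)
  next
    fix \<psi>' assume a: "admissible \<mu> (x, y) \<psi>' T"
    hence "(\<lambda>s. vel \<mu> (\<psi>' s)) integrable_on {0..T}" using T0 by (simp add: admissible_def)
    from evader_bound[OF assms(1) T0 this, of "(x, y)"]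
    show "norm (traj \<mu> (x, y) \<psi>' T) \<le> norm (traj \<mu> (x, y) (\<lambda>t. arccos \<mu>) T)"
      using val by simp
  qed
qed

end
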